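(* For every real $p>1$ and all integers $s\ge2$ and $n\ge s$, $$\sum_{\mathbf a\in\mathcal{F}_s(n)}\Big(\frac{n}{\prod_{j=1}^sa_j}\Big)^p<C_p^{s-1},$$ where $\mathcal{F}_s(n)=\{\mathbf a\in\{1,\dots,n\}^s:\sum_{j=1}^sa_j=n\}$ and $C_p=2^p\zeta(p)$ with $\zeta(p)=\sum_{a=1}^\infty a^{-p}$. *)

theory Defs
  imports "HOL-Analysis.Analysis"
begin

definition F_set :: "nat \<Rightarrow> nat \<Rightarrow> (nat \<Rightarrow> nat) set" where
  "F_set s n = {a \<in> ({1..s} \<rightarrow>\<^sub>E {1..n}). (\<Sum>j=1..s. a j) = n}"

definition zeta_real :: "real \<Rightarrow> real" where
  "zeta_real p = (\<Sum>a. 1 / (real (Suc a)) powr p)"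

definition C_const :: "real \<Rightarrow> real" where
  "C_const p = 2 powr p * zeta_real p"

end

theory Submission
  imports Defs
begin

definition GG :: "real \<Rightarrow> nat \<Rightarrow> nat \<Rightarrow> real" where
  "GG p s n = (\<Sum>a\<in>F_set s n. (real n / real (\<Prod>j=1..s. a j)) powr p)"

lemma fin_F: "finite (F_set s n)"
proof -
  have "F_set s n \<subseteq> {1..s} \<rightarrow>\<^sub>E {1..n}" by (auto simp: F_set_def)
  then show ?thesis by (rule finite_subset) (simp add: finite_PiE)
qed

lemma zeta_summable:
  assumes "p > 1"
  shows "summable (\<lambda>a. 1 / (real (Suc a)) powr p)"
proof -
  have "summable (\<lambda>a. real a powr (-p))" using assms summable_real_powr_iff[of "-p"] by simp
  then have "summable (\<lambda>a. real (Suc a) powr (-p))" by (rule summable_Suc_iff[THEN iffD2])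
  moreover have "real (Suc a) powr (-p) = 1 / (real (Suc a)) powr p" for a
    by (simp add: powr_minus_divide)
  ultimately show ?thesis by simp
qed

lemma partial_lt_zeta:
  assumes "p > 1"
  shows "(\<Sum>b=1..m. 1 / real b powr p) < zeta_real p"
proof -
  have "(\<Sum>b=1..m. 1 / real b powr p) = (\<Sum>a<m. 1 / real (Suc a) powr p)"
  proof -
    have "{1..m} = Suc ` {..<m}" by (simp add: image_Suc_lessThan)
    then show ?thesis by (simp add: sum.reindex del: of_nat_Suc)
  qed
  also have "\<dots> < zeta_real p" unfolding zeta_real_def
    by (rule sum_less_suminf[OF zeta_summable[OF assms]]) simp
  finally show ?thesis .
qed

lemma convex_pair:
  fixes p x y :: real
  assumes "p > 1" "x > 0" "y > 0"
  shows "(x + y) powr p \<le> 2 powr p / 2 * (x powr p + y powr p)"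
proof -
  have c: "convex_on {0<..} (\<lambda>x::real. x powr p)" using assms by (intro powr_convex) simp
  have e: "(1 - 1/2) *\<^sub>R x + (1/2) *\<^sub>R y = (x + y) / 2" by simp
  have "((1 - 1/2) *\<^sub>R x + (1/2) *\<^sub>R y) powr p \<le> (1 - 1/2) * x powr p + (1/2) * y powr p"
    using convex_onD[OF c, of "1/2" x y] assms by simp
  then have h: "((x + y) / 2) powr p \<le> (x powr p + y powr p) / 2" unfolding e by simp
  have eq: "2 * ((x + y) / 2) = x + y" by simp
  have "(x + y) powr p = (2 * ((x + y) / 2)) powr p" by (simp only: eq)
  also have "\<dots> = 2 powr p * ((x + y) / 2) powr p"
    by (rule powr_mult)
  also have "\<dots> \<le> 2 powr p * ((x powr p + y powr p) / 2)"
    using h by (intro mult_left_mono) auto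
  finally show ?thesis by simp
qed

lemma zeta_pos: assumes "p > 1" shows "zeta_real p > 0"
  using partial_lt_zeta[OF assms, of 0] by simp

lemma C_pos: assumes "p > 1" shows "C_const p > 0"
  using zeta_pos[OF assms] by (simp add: C_const_def)

lemma pair_bound:
  assumes "p > 1"
  shows "(\<Sum>b=1..n-1. (real n / (real (n - b) * real b)) powr p) < C_const p"
proof -
  have "(\<Sum>b=1..n-1. (real n / (real (n - b) * real b)) powr p)
     \<le> (\<Sum>b=1..n-1. 2 powr p / 2 * ((1 / real b) powr p + (1 / real (n - b)) powr p))"
  proof (rule sum_mono)
    fix b assume b: "b \<in> {1..n-1}"
    then have "real n / (real (n - b) * real b) = 1 / real b + 1 / real (n - b)"
      by (auto simp: field_simps of_nat_diff)
    then show "(real n / (real (n - b) * real b)) powr p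
        \<le> 2 powr p / 2 * ((1 / real b) powr p + (1 / real (n - b)) powr p)"
      using convex_pair[OF assms, of "1 / real b" "1 / real (n - b)"] b by auto
  qed
  also have "\<dots> = 2 powr p / 2 * ((\<Sum>b=1..n-1. (1 / real b) powr p) + (\<Sum>b=1..n-1. (1 / real (n - b)) powr p))"
    by (simp only: sum.distrib[symmetric] sum_distrib_left)
  also have "(\<Sum>b=1..n-1. (1 / real (n - b)) powr p) = (\<Sum>b=1..n-1. (1 / real b) powr p)"
    by (rule sum.reindex_bij_witness[where i="\<lambda>b. n - b" and j="\<lambda>b. n - b"]) (simp_all, linarith+)
  also have "(\<Sum>b=1..n-1. (1 / real b) powr p) = (\<Sum>b=1..n-1. 1 / real b powr p)"
    by (intro sum.cong refl) (simp add: powr_divide)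
  finally have "(\<Sum>b=1..n-1. (real n / (real (n - b) * real b)) powr p)
      \<le> 2 powr p * (\<Sum>b=1..n-1. 1 / real b powr p)" by simp
  also have "\<dots> < 2 powr p * zeta_real p"
    using partial_lt_zeta[OF assms] by simp
  finally show ?thesis by (simp add: C_const_def)
qed

lemma decomp:
  assumes "s \<ge> 1"
  shows "GG p (Suc s) n = (\<Sum>b=1..n-1. (real n / (real (n - b) * real b)) powr p * GG p s (n - b))"
proof -
  let ?S = "Sigma {1..n-1} (\<lambda>b. F_set s (n - b))"
  let ?T = "F_set (Suc s) n"
  let ?j = "\<lambda>(b, a'). a'(Suc s := b)"
  let ?i = "\<lambda>a. (a (Suc s), a(Suc s := undefined))"
  let ?h = "\<lambda>a. (real n / real (\<Prod>j=1..Suc s. a j)) powr p"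
  let ?g = "\<lambda>(b, a'::nat\<Rightarrow>nat). (real n / (real (n - b) * real b)) powr p * (real (n - b) / real (\<Prod>j=1..s. a' j)) powr p"
  have prodS: "(\<Prod>j=1..Suc s. f j) = (\<Prod>j=1..s. f j) * f (Suc s)" for f :: "nat \<Rightarrow> nat"
    by (simp add: prod.nat_ivl_Suc')
  have sumS: "(\<Sum>j=1..Suc s. f j) = (\<Sum>j=1..s. f j) + f (Suc s)" for f :: "nat \<Rightarrow> nat"
    by (simp add: sum.nat_ivl_Suc')
  have "sum ?g ?S = sum ?h ?T"
  proof (rule sum.reindex_bij_witness[where i="?i" and j="?j"])
    fix x assume x: "x \<in> ?S"
    obtain b a' where xe: "x = (b, a')" by force
    with x have b: "1 \<le> b" "b \<le> n - 1" and a': "a' \<in> {1..s} \<rightarrow>\<^sub>E {1..n-b}" "(\<Sum>j=1..s. a' j) = n - b"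
      by (auto simp: F_set_def)
    have ext: "a' (Suc s) = undefined" using a' by (auto simp: PiE_def extensional_def)
    show "?i (?j x) = x" using xe ext by auto
    have eqs: "(\<Sum>j=1..s. (a'(Suc s := b)) j) = (\<Sum>j=1..s. a' j)"
      by (intro sum.cong) auto
    have eqp: "(\<Prod>j=1..s. (a'(Suc s := b)) j) = (\<Prod>j=1..s. a' j)"
      by (intro prod.cong) auto
    show "?j x \<in> ?T" using xe a' b
      by (auto simp: F_set_def sumS eqs PiE_def extensional_def Pi_def)
    have pp: "(\<Prod>j=1..s. a' j) > 0" using a' by (auto simp: PiE_def Pi_def intro!: prod_pos)
    have nb: "real (n - b) > 0" using b by auto
    show "?h (?j x) = ?g x"
      using xe prodS eqp pp nb b
      by (simp add: powr_mult[symmetric] field_simps)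
  next
    fix a assume a: "a \<in> ?T"
    then have aP: "a \<in> {1..Suc s} \<rightarrow>\<^sub>E {1..n}" and as: "(\<Sum>j=1..Suc s. a j) = n"
      by (auto simp: F_set_def)
    show "?j (?i a) = a" by auto
    have a1: "a 1 \<ge> 1" using aP assms by (auto simp: PiE_def Pi_def)
    have "a 1 \<le> (\<Sum>j=1..s. a j)" using assms by (intro member_le_sum) auto
    then have bl: "a (Suc s) \<le> n - 1" "a (Suc s) \<ge> 1" using as a1 sumS[of a] aP by (auto simp: PiE_def Pi_def)
    have eqs: "(\<Sum>j=1..s. (a(Suc s := undefined)) j) = (\<Sum>j=1..s. a j)"
      by (intro sum.cong) auto
    have sn: "(\<Sum>j=1..s. a j) = n - a (Suc s)" using as sumS[of a] by simp
    have "a(Suc s := undefined) \<in> {1..s} \<rightarrow>\<^sub>E {1..n - a (Suc s)}"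
    proof -
      have "a j \<le> (\<Sum>j=1..s. a j)" if "j \<in> {1..s}" for j using that by (intro member_le_sum) auto
      then show ?thesis using aP sn by (auto simp: PiE_def Pi_def extensional_def)
    qed
    then show "?i a \<in> ?S" using bl eqs sn by (auto simp: F_set_def)
  qed
  also have "sum ?g ?S = (\<Sum>b=1..n-1. \<Sum>a'\<in>F_set s (n - b). (real n / (real (n - b) * real b)) powr p * (real (n - b) / real (\<Prod>j=1..s. a' j)) powr p)"
    by (subst sum.Sigma) (auto simp: fin_F)
  finally show ?thesis unfolding GG_def by (simp add: sum_distrib_left)
qed

lemma base: "GG p 1 n \<le> 1"
proof -
  have t: "(real n / real (\<Prod>j=1..1. a j)) powr p \<le> 1" if "a \<in> F_set 1 n" for a
    using that by (auto simp: F_set_def)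
  have c: "card (F_set 1 n) \<le> Suc 0"
  proof (subst card_le_Suc0_iff_eq[OF fin_F], intro ballI)
    fix a b assume "a \<in> F_set 1 n" "b \<in> F_set 1 n"
    then show "a = b" by (auto simp: F_set_def PiE_def extensional_def intro!: ext) (metis le_antisym not_less_eq_eq)
  qed
  have "GG p 1 n \<le> (\<Sum>a\<in>F_set 1 n. 1)" unfolding GG_def using t by (intro sum_mono) auto
  also have "\<dots> \<le> 1" using c by simp
  finally show ?thesis .
qed

lemma step:
  assumes "p > 1" "s \<ge> 1" "\<And>m. GG p s m \<le> C_const p ^ (s - 1)"
  shows "GG p (Suc s) n < C_const p ^ s"
proof -
  let ?x = "\<lambda>b. (real n / (real (n - b) * real b)) powr p"
  have "GG p (Suc s) n = (\<Sum>b=1..n-1. ?x b * GG p s (n - b))" by (rule decomp[OF assms(2)])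
  also have "\<dots> \<le> (\<Sum>b=1..n-1. ?x b * C_const p ^ (s - 1))"
    by (intro sum_mono mult_left_mono assms(3)) auto
  also have "\<dots> = (\<Sum>b=1..n-1. ?x b) * C_const p ^ (s - 1)" by (simp add: sum_distrib_right)
  also have "\<dots> < C_const p * C_const p ^ (s - 1)"
    using pair_bound[OF assms(1)] C_pos[OF assms(1)] by (intro mult_strict_right_mono) auto
  also have "\<dots> = C_const p ^ s" using assms(2) by (cases s) auto
  finally show ?thesis .
qed

lemma all_le:
  assumes "p > 1" "s \<ge> 1"
  shows "GG p s n \<le> C_const p ^ (s - 1)"
  using assms(2)
proof (induction s arbitrary: n rule: dec_induct)
  case base then show ?case using Submission.base[of p n] by simp
next
  case (step k) then show ?case using Submission.step[OF assms(1) step(1)] by (simp add: less_imp_le)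
qed

theorem lemmaS10:
  fixes p :: real and s n :: nat
  assumes "p > 1" and "s \<ge> 2" and "n \<ge> s"
  shows "(\<Sum>a\<in>F_set s n. (real n / real (\<Prod>j=1..s. a j)) powr p)
           < C_const p ^ (s - 1)"
proof -
  obtain k where k: "s = Suc k" "k \<ge> 1" using assms(2) by (cases s) auto
  have "GG p (Suc k) n < C_const p ^ k"
    by (rule step[OF assms(1) k(2)]) (rule all_le[OF assms(1) k(2)])
  then show ?thesis using k by (simp add: GG_def)
qed

end
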